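(* Let $n,N,M,K\geq 1$, let $D=-i\sum_{j=1}^n\hat{D}_j\partial_j$ with $\hat{D}_j\in\mathcal{L}(\mathbb{C}^N,\mathbb{C}^M)$, and let $A\in L^\infty(\mathbb{R}^n;\mathcal{L}(\mathbb{C}^M,\mathbb{C}^K))$. Suppose there is $c>0$ such that $$\Big|A(x)\sum_{j=1}^n\hat{D}_jv_j\Big|\geq c\Big|\sum_{j=1}^n\hat{D}_jv_j\Big|\qquad\text{for all }v_1,\dots,v_n\in\mathbb{C}^N\text{ and a.e. }x\in\mathbb{R}^n.$$ Then for every $p\in[1,\infty)$ there is $c_p>0$ with $\|ADu\|_{L^p}\geq c_p\|Du\|_{L^p}$ for all $u\in C_c^\infty(\mathbb{R}^n;\mathbb{C}^N)$. *)

theory Defs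
  imports "HOL-Analysis.Analysis"
begin

text \<open>C-infinity: differentiable everywhere, and every directional derivative
  (in every direction) is again C-infinity (coinductively, i.e. all orders).\<close>
coinductive smooth :: "('a::real_normed_vector \<Rightarrow> 'b::real_normed_vector) \<Rightarrow> bool" where
  "(\<forall>x. f differentiable (at x)) \<Longrightarrow> (\<forall>v. smooth (\<lambda>x. frechet_derivative f (at x) v))
     \<Longrightarrow> smooth f"

definition Cc_infty :: "('a::real_normed_vector \<Rightarrow> 'b::real_normed_vector) \<Rightarrow> bool" where
  "Cc_infty u \<longleftrightarrow> smooth u \<and> compact (closure {x. u x \<noteq> 0})"

definition Dop :: "('n::finite \<Rightarrow> complex^'N^'M) \<Rightarrow> (real^'n \<Rightarrow> complex^'N) \<Rightarrow> real^'n \<Rightarrow> complex^'M" where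
  "Dop Dh u x = (\<chi> k. - \<i> * (\<Sum>j\<in>UNIV. Dh j *v frechet_derivative u (at x) (axis j 1)) $ k)"

definition Lp_norm :: "real \<Rightarrow> ('a::euclidean_space \<Rightarrow> 'b::real_normed_vector) \<Rightarrow> real" where
  "Lp_norm p f = (\<integral>x. norm (f x) powr p \<partial>lebesgue) powr (1 / p)"

end

theory Submission
  imports Defs
begin


lemma mv_norm_le:
  fixes A :: "complex^'m::finite^'k::finite"
  shows "norm (A *v x) \<le> real CARD('k) * real CARD('m) * norm A * norm x"
proof -
  have comp: "norm ((A *v x) $ i) \<le> real CARD('m) * (norm A * norm x)" for i
  proof -
    have "norm ((A *v x) $ i) = norm (\<Sum>j\<in>UNIV. A $ i $ j * x $ j)"
      by (simp add: matrix_vector_mult_def)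
    also have "\<dots> \<le> (\<Sum>j\<in>UNIV. norm (A $ i $ j * x $ j))" by (rule norm_sum)
    also have "\<dots> \<le> (\<Sum>j\<in>(UNIV::'m set). norm A * norm x)"
    proof (rule sum_mono)
      fix j
      have "norm (A $ i $ j) \<le> norm A" 
      proof -
        have "norm (A $ i $ j) \<le> norm (A $ i)" by (rule Finite_Cartesian_Product.norm_nth_le)
        also have "\<dots> \<le> norm A" by (rule Finite_Cartesian_Product.norm_nth_le)
        finally show ?thesis .
      qed
      moreover have "norm (x $ j) \<le> norm x" by (rule Finite_Cartesian_Product.norm_nth_le)
      ultimately show "norm (A $ i $ j * x $ j) \<le> norm A * norm x"
        by (simp add: norm_mult mult_mono)
    qed
    finally show ?thesis by simp
  qed
  have "norm (A *v x) \<le> (\<Sum>i\<in>UNIV. norm ((A *v x) $ i))"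
    by (simp add: norm_vec_def L2_set_le_sum)
  also have "\<dots> \<le> (\<Sum>i\<in>(UNIV::'k set). real CARD('m) * (norm A * norm x))"
    by (rule sum_mono[OF comp])
  finally show ?thesis by (simp add: mult.assoc)
qed

lemma mv_cont: "continuous_on UNIV (\<lambda>p::((complex^'m::finite^'k::finite) \<times> (complex^'m)). fst p *v snd p)"
  unfolding matrix_vector_mult_def
  by (intro continuous_intros continuous_on_vec_lambda)


lemma cont_mv:
  fixes f :: "'a::topological_space \<Rightarrow> complex^'m::finite^'k::finite"
  assumes "continuous_on S f" "continuous_on S g"
  shows "continuous_on S (\<lambda>x. f x *v g x)"
  unfolding matrix_vector_mult_def
  by (intro continuous_intros continuous_on_vec_lambda assms)

lemma cont_sv:
  fixes f :: "'a::topological_space \<Rightarrow> complex^'m::finite"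
  assumes "continuous_on S f"
  shows "continuous_on S (\<lambda>x. c *s f x)"
  unfolding vector_scalar_mult_def
  by (intro continuous_intros continuous_on_vec_lambda assms)

lemma sum_sv:
  fixes Dh :: "'n::finite \<Rightarrow> complex^'N::finite^'M::finite"
  shows "(\<Sum>j\<in>UNIV. Dh j *v (a *s v j)) = a *s (\<Sum>j\<in>UNIV. Dh j *v v j)"
  by (simp add: vector_scalar_commute vec_eq_iff sum_distrib_left)

lemma smooth_partial_cont:
  assumes "smooth u"
  shows "continuous_on UNIV (\<lambda>x. frechet_derivative u (at x) v)"
proof -
  from assms have "smooth (\<lambda>x. frechet_derivative u (at x) v)" by (cases rule: smooth.cases) auto
  then have "\<forall>x. (\<lambda>x. frechet_derivative u (at x) v) differentiable (at x)"
    by (cases rule: smooth.cases) auto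
  then show ?thesis
    by (meson continuous_at_imp_continuous_on differentiable_imp_continuous_within)
qed

lemma smooth_partial_zero:
  assumes "smooth u" and x: "x \<notin> closure {x. u x \<noteq> 0}"
  shows "frechet_derivative u (at x) v = 0"
proof -
  have "((\<lambda>y. 0) has_derivative (\<lambda>h. 0)) (at x)" by simp
  then have "(u has_derivative (\<lambda>h. 0)) (at x)"
    by (rule has_derivative_transform_within_open[where s="- closure {x. u x \<noteq> 0}"])
       (use x in \<open>auto simp: x\<close>, metis (mono_tags) closure_subset mem_Collect_eq subsetD)
  then have "frechet_derivative u (at x) = (\<lambda>h. 0)"
    using frechet_derivative_at by metis
  then show ?thesis by simp
qed

lemma Dop_eq:
  "Dop Dh u x = (- \<i>) *s (\<Sum>j\<in>UNIV. Dh j *v frechet_derivative u (at x) (axis j 1))"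
  unfolding Dop_def by (simp add: vec_eq_iff)

theorem propositionA3:
  fixes Dh :: "'n::finite \<Rightarrow> complex^'N::finite^'M::finite"
    and A :: "real^'n \<Rightarrow> complex^'M^'K::finite"
  assumes A_meas: "A \<in> borel_measurable lebesgue"
    and A_bdd: "\<exists>B. AE x in lebesgue. norm (A x) \<le> B"
    and lower: "\<exists>c>0. AE x in lebesgue. \<forall>v :: 'n \<Rightarrow> complex^'N.
        norm (A x *v (\<Sum>j\<in>UNIV. Dh j *v v j)) \<ge> c * norm (\<Sum>j\<in>UNIV. Dh j *v v j)"
  shows "\<forall>p::real. 1 \<le> p \<longrightarrow> (\<exists>cp>0. \<forall>u :: real^'n \<Rightarrow> complex^'N. Cc_infty u \<longrightarrow>
           Lp_norm p (\<lambda>x. A x *v Dop Dh u x) \<ge> cp * Lp_norm p (Dop Dh u))"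
proof (intro allI impI)
  fix p :: real assume p: "1 \<le> p"
  obtain B where B: "AE x in lebesgue. norm (A x) \<le> B" using A_bdd by blast
  obtain c where c: "c > 0" and cl: "AE x in lebesgue. \<forall>v :: 'n \<Rightarrow> complex^'N.
        norm (A x *v (\<Sum>j\<in>UNIV. Dh j *v v j)) \<ge> c * norm (\<Sum>j\<in>UNIV. Dh j *v v j)"
    using lower by blast
  show "\<exists>cp>0. \<forall>u :: real^'n \<Rightarrow> complex^'N. Cc_infty u \<longrightarrow>
           Lp_norm p (\<lambda>x. A x *v Dop Dh u x) \<ge> cp * Lp_norm p (Dop Dh u)"
  proof (intro exI[of _ c] conjI allI impI c)
    fix u :: "real^'n \<Rightarrow> complex^'N"
    assume "Cc_infty u"
    then have sm: "smooth u" and K: "compact (closure {x. u x \<noteq> 0})"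
      unfolding Cc_infty_def by auto
    define K where "K = closure {x. u x \<noteq> 0}"
    define D where "D = Dop Dh u"
    define W where "W = (\<lambda>x. A x *v D x)"
    have Kc: "compact K" using K K_def by simp
    have Dc: "continuous_on UNIV D"
      unfolding D_def Dop_eq
      by (intro cont_sv continuous_on_sum cont_mv continuous_on_const smooth_partial_cont[OF sm])
    have D0: "D x = 0" if "x \<notin> K" for x
      unfolding D_def Dop_eq using smooth_partial_zero[OF sm] that K_def by simp
    have Dm: "D \<in> borel_measurable lebesgue"
      using continuous_imp_measurable_on_sets_lebesgue[OF Dc] lebesgue_on_UNIV_eq by force
    have Wm: "W \<in> borel_measurable lebesgue"
      unfolding W_def
      by (rule borel_measurable_continuous_Pair[OF A_meas Dm]) (use mv_cont in simp)
    obtain M where M: "\<And>x. norm (D x) \<le> M"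
    proof -
      have "bounded (D ` K)" using compact_continuous_image[OF continuous_on_subset[OF Dc] Kc]
        by (simp add: compact_imp_bounded)
      then obtain M where "\<And>y. y \<in> D ` K \<Longrightarrow> norm y \<le> M" by (meson bounded_iff)
      then have "norm (D x) \<le> max M 0" for x using D0[of x] by (cases "x \<in> K") force+
      then show ?thesis using that by blast
    qed
    have M0: "0 \<le> M" using M[of 0] norm_ge_zero order_trans by blast
    define C where "C = real CARD('K) * real CARD('M) * \<bar>B\<bar>"
    have C0: "0 \<le> C" unfolding C_def by simp
    have WC: "AE x in lebesgue. norm (W x) \<le> C * norm (D x)"
      using B
    proof (eventually_elim)
      case (elim x)
      have "norm (W x) \<le> real CARD('K) * real CARD('M) * norm (A x) * norm (D x)"
        unfolding W_def by (rule mv_norm_le)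
      also have "\<dots> \<le> C * norm (D x)" unfolding C_def
        using elim by (intro mult_right_mono mult_left_mono) auto
      finally show ?case .
    qed
    have Kl: "K \<in> sets lebesgue" "emeasure lebesgue K < \<infinity>"
      using lmeasurable_compact[OF Kc] by (auto simp: fmeasurable_def)
    have indint: "integrable lebesgue (\<lambda>x. R * indicator K x :: real)" for R
      using Kl by (intro integrable_mult_right) auto
    have intD: "integrable lebesgue (\<lambda>x. norm (D x) powr p)"
    proof (rule Bochner_Integration.integrable_bound[OF indint[of "M powr p"]])
      show "(\<lambda>x. norm (D x) powr p) \<in> borel_measurable lebesgue" using Dm by measurable
      show "AE x in lebesgue. norm (norm (D x) powr p) \<le> norm (M powr p * indicator K x :: real)"
      proof (intro AE_I2)
        fix x show "norm (norm (D x) powr p) \<le> norm (M powr p * indicator K x :: real)"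
          using D0[of x] M[of x] M0 p by (cases "x \<in> K") (auto intro: powr_mono2)
      qed
    qed
    have intW: "integrable lebesgue (\<lambda>x. norm (W x) powr p)"
    proof (rule Bochner_Integration.integrable_bound[OF indint[of "(C*M) powr p"]])
      show "(\<lambda>x. norm (W x) powr p) \<in> borel_measurable lebesgue" using Wm by measurable
      show "AE x in lebesgue. norm (norm (W x) powr p) \<le> norm ((C*M) powr p * indicator K x :: real)"
        using WC
      proof (eventually_elim)
        case (elim x)
        have "norm (W x) \<le> C * M" using elim M[of x] C0 by (meson mult_left_mono order_trans)
        then show ?case
          using D0[of x] elim C0 M0 p by (cases "x \<in> K") (auto intro: powr_mono2)
      qed
    qed
    have low: "AE x in lebesgue. c powr p * norm (D x) powr p \<le> norm (W x) powr p"
      using cl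
    proof (eventually_elim)
      case (elim x)
      have "c * norm (D x) \<le> norm (W x)"
        using elim[rule_format, of "\<lambda>j. (- \<i>) *s frechet_derivative u (at x) (axis j 1)"]
        unfolding W_def D_def Dop_eq sum_sv by simp
      then have "(c * norm (D x)) powr p \<le> norm (W x) powr p"
        using c p by (intro powr_mono2) auto
      then show ?case using c by (simp add: powr_mult)
    qed
    define I where "I = (\<integral>x. norm (D x) powr p \<partial>lebesgue)"
    have I0: "0 \<le> I" unfolding I_def by simp
    have "c powr p * I \<le> (\<integral>x. norm (W x) powr p \<partial>lebesgue)"
      unfolding I_def
      using integral_mono_AE[OF integrable_mult_right[OF intD] intW low] by simp
    then have "(c powr p * I) powr (1/p) \<le> Lp_norm p W"
      unfolding Lp_norm_def using p c I0 by (intro powr_mono2) auto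
    moreover have "(c powr p * I) powr (1/p) = c * Lp_norm p D"
      unfolding Lp_norm_def I_def[symmetric] using p c I0
      by (simp add: powr_mult powr_powr)
    ultimately show "c * Lp_norm p (Dop Dh u) \<le> Lp_norm p (\<lambda>x. A x *v Dop Dh u x)"
      unfolding W_def D_def by simp
  qed
qed

end
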